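(* Fix a dataset $\mathbb D_N$ and a point $x\in\mathcal X$. If the GP-CBF-SOCP is feasible at $x$, then the symmetric matrix $$H(x|\mathbb D_N)=\begin{bmatrix}H_{11}&H_{1u}\\ H_{1u}^T&H_{uu}\end{bmatrix}$$ is not positive definite, where - $H_{11}=\beta^2\Sigma_{L_fB}-(\widehat{L_fB}+\gamma(B(x)))^2$, - $H_{1u}=\beta^2(\Sigma_{L_fB}^{1/2})^T\Sigma_{L_gB}^{1/2}-(\widehat{L_fB}+\gamma(B(x)))\widehat{L_gB}$, - $H_{uu}=\beta^2\Sigma_{L_gB}-\widehat{L_gB}^T\widehat{L_gB}$, with all quantities evaluated at $(x|\mathbb D_N)$.
   Context: Consider $\dot x=f(x)+g(x)u$ with $x\in\mathcal X\subset\mathbb R^n$ and $u\in\mathbb R^m$, where $f,g$ are locally Lipschitz and unknown. A nominal model $\tilde f,\tilde g$ is available. Let $B:\mathcal X\to\mathbb R$ be $C^1$, let $\gamma$ be extended class-$\mathcal K_\infty$, and let $u_{\text{ref}}$ be a reference controller. Lie derivatives: $L_{\tilde f}B=\nabla B\,\tilde f$ and $L_{\tilde g}B=\nabla B\,\tilde g\in\mathbb R^{1\times m}$; $L_fB$ and $L_gB$ are defined similarly. Set $\Delta_B(x,u)=(L_fB-L_{\tilde f}B)(x)+(L_gB-L_{\tilde g}B)(x)u$. A dataset $\mathbb D_N=\{((x_j,u_j),z_j)\}$ consists of $z_j=\Delta_B(x_j,u_j)+\epsilon_j$. GP model with the affine dot product kernel $k_c((x,y),(x',y'))=y^T\mathrm{diag}(k_1(x,x'),\dots,k_{m+1}(x,x'))y'$: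 - Let $y_j=[1,u_j^T]^T$, $\mathbf z=(z_j)$, let $\sigma_n>0$, and let $K_c$ be the Gram matrix on the data. - Let $K_{**}(x)=\mathrm{diag}(k_i(x,x))$, and let $K_{*Y}(x)$ have entries $k_i(x,x_j)(y_j)_i$. - Define $m_B(x|\mathbb D_N)=K_{*Y}(K_c+\sigma_n^2I)^{-1}\mathbf z$ and $\Sigma_B(x|\mathbb D_N)=K_{**}-K_{*Y}(K_c+\sigma_n^2I)^{-1}K_{*Y}^T$, which is positive definite. - The posterior mean and standard deviation are $\mu_B=m_B^T[1;u]$ and $\sigma_B=\sqrt{[1,u^T]\Sigma_B[1;u]}$. $\beta>0$ is a constant. Derived quantities: - $\widehat{L_fB}=L_{\tilde f}B+(m_B)_1$ and $\widehat{L_gB}=L_{\tilde g}B+((m_B)_2,\dots,(m_B)_{m+1})$. - $\Sigma_B^{1/2}$ is the symmetric positive definite square root of $\Sigma_B$. - $\Sigma_{L_fB}^{1/2}$ is its first column and $\Sigma_{L_gB}^{1/2}$ its remaining $m$ columns. - $\Sigma_{L_fB}=(\Sigma_{L_fB}^{1/2})^T\Sigma_{L_fB}^{1/2}\in\mathbb R$ and $\Sigma_{L_gB}=(\Sigma_{L_gB}^{1/2})^T\Sigma_{L_gB}^{1/2}\in\mathbb R^{m\times m}$. The GP-CBF-SOCP at $x$ is: minimize $\|u-u_{\text{ref}}(x)\|^2$ subject to $L_{\tilde f}B(x)+L_{\tilde g}B(x)u+\mu_B(x,u|\mathbb D_N)-\beta\sigma_B(x,u|\mathbb D_N)+\gamma(B(x))\ge0$.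 It is feasible at $x$ if some $u$ satisfies the constraint. *)

theory Defs
  imports "HOL-Analysis.Analysis"
begin

definition ext_class_K_inf :: "(real \<Rightarrow> real) \<Rightarrow> bool" where
  "ext_class_K_inf \<gamma> \<longleftrightarrow> continuous_on UNIV \<gamma> \<and> strict_mono \<gamma> \<and> \<gamma> 0 = 0 \<and>
     filterlim \<gamma> at_top at_top \<and> filterlim \<gamma> at_bot at_bot"

definition sym_mat :: "real^'k^'k \<Rightarrow> bool" where
  "sym_mat A \<longleftrightarrow> transpose A = A"

definition pos_def :: "real^'k^'k \<Rightarrow> bool" where
  "pos_def A \<longleftrightarrow> (\<forall>v. v \<noteq> 0 \<longrightarrow> v \<bullet> (A *v v) > 0)"

(* Indices of R^(m+1) are represented by the type unit + 'm:
   Inl () is the first (drift) coordinate, Inr j the coordinate of input j. *)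
definition yvec :: "real^'m \<Rightarrow> real^(unit + 'm)" where
  "yvec u = (\<chi> i. case i of Inl _ \<Rightarrow> 1 | Inr j \<Rightarrow> u $ j)"

definition LieF :: "(real^'n \<Rightarrow> real^'n) \<Rightarrow> (real^'n \<Rightarrow> real^'n) \<Rightarrow> real^'n \<Rightarrow> real" where
  "LieF gradB F x = gradB x \<bullet> F x"

definition LieG :: "(real^'n \<Rightarrow> real^'n) \<Rightarrow> (real^'n \<Rightarrow> real^'m^'n) \<Rightarrow> real^'n \<Rightarrow> real^'m" where
  "LieG gradB G x = gradB x v* G x"

definition DeltaB :: "(real^'n \<Rightarrow> real^'n) \<Rightarrow> (real^'n \<Rightarrow> real^'n) \<Rightarrow> (real^'n \<Rightarrow> real^'m^'n)
    \<Rightarrow> (real^'n \<Rightarrow> real^'n) \<Rightarrow> (real^'n \<Rightarrow> real^'m^'n) \<Rightarrow> real^'n \<Rightarrow> real^'m \<Rightarrow> real" where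
  "DeltaB gradB f g ft gt x u =
     (LieF gradB f x - LieF gradB ft x) + (LieG gradB g x - LieG gradB gt x) \<bullet> u"

(* GP with affine dot-product kernel; k i is the i-th base kernel, data indexed by 'd:
   xs j, us j, zs $ j. *)
definition Kc :: "((unit + 'm::finite) \<Rightarrow> real^'n \<Rightarrow> real^'n \<Rightarrow> real) \<Rightarrow> ('d::finite \<Rightarrow> real^'n)
     \<Rightarrow> ('d \<Rightarrow> real^'m) \<Rightarrow> real^'d^'d" where
  "Kc k xs us = (\<chi> j l. \<Sum>i\<in>UNIV. (yvec (us j)) $ i * k i (xs j) (xs l) * (yvec (us l)) $ i)"

definition KsY :: "((unit + 'm::finite) \<Rightarrow> real^'n \<Rightarrow> real^'n \<Rightarrow> real) \<Rightarrow> ('d::finite \<Rightarrow> real^'n)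
     \<Rightarrow> ('d \<Rightarrow> real^'m) \<Rightarrow> real^'n \<Rightarrow> real^'d^(unit + 'm)" where
  "KsY k xs us x = (\<chi> i j. k i x (xs j) * (yvec (us j)) $ i)"

definition Kss :: "((unit + 'm::finite) \<Rightarrow> real^'n \<Rightarrow> real^'n \<Rightarrow> real) \<Rightarrow> real^'n \<Rightarrow> real^(unit + 'm)^(unit + 'm)" where
  "Kss k x = (\<chi> i l. if i = l then k i x x else 0)"

definition mB :: "((unit + 'm::finite) \<Rightarrow> real^'n \<Rightarrow> real^'n \<Rightarrow> real) \<Rightarrow> ('d::finite \<Rightarrow> real^'n)
     \<Rightarrow> ('d \<Rightarrow> real^'m) \<Rightarrow> real^'d \<Rightarrow> real \<Rightarrow> real^'n \<Rightarrow> real^(unit + 'm)" where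
  "mB k xs us zs \<sigma>n x =
     KsY k xs us x *v (matrix_inv (Kc k xs us + (\<sigma>n\<^sup>2) *\<^sub>R mat 1) *v zs)"

definition SigmaB :: "((unit + 'm::finite) \<Rightarrow> real^'n \<Rightarrow> real^'n \<Rightarrow> real) \<Rightarrow> ('d::finite \<Rightarrow> real^'n)
     \<Rightarrow> ('d \<Rightarrow> real^'m) \<Rightarrow> real \<Rightarrow> real^'n \<Rightarrow> real^(unit + 'm)^(unit + 'm)" where
  "SigmaB k xs us \<sigma>n x =
     Kss k x - KsY k xs us x ** matrix_inv (Kc k xs us + (\<sigma>n\<^sup>2) *\<^sub>R mat 1) ** transpose (KsY k xs us x)"

definition muB where
  "muB k xs us zs \<sigma>n x u = mB k xs us zs \<sigma>n x \<bullet> yvec u"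

definition sigmaB where
  "sigmaB k xs us \<sigma>n x u = sqrt (yvec u \<bullet> (SigmaB k xs us \<sigma>n x *v yvec u))"

definition socp_feasible where
  "socp_feasible gradB ft gt B \<gamma> \<beta> k xs us zs \<sigma>n x \<longleftrightarrow>
     (\<exists>u. LieF gradB ft x + LieG gradB gt x \<bullet> u + muB k xs us zs \<sigma>n x u
            - \<beta> * sigmaB k xs us \<sigma>n x u + \<gamma> (B x) \<ge> 0)"

(* The matrix H(x|D_N), built from the estimates and the given square root S of Sigma_B *)
definition Hmat :: "(real^'n \<Rightarrow> real^'n) \<Rightarrow> (real^'n \<Rightarrow> real^'n) \<Rightarrow> (real^'n \<Rightarrow> real^'m^'n)
   \<Rightarrow> (real^'n \<Rightarrow> real) \<Rightarrow> (real \<Rightarrow> real) \<Rightarrow> real \<Rightarrow> real^(unit + 'm) \<Rightarrow> real^(unit + 'm)^(unit + 'm)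
   \<Rightarrow> real^'n \<Rightarrow> real^(unit + 'm)^(unit + 'm)" where
  "Hmat gradB ft gt B \<gamma> \<beta> m S x =
    (let LfBh = LieF gradB ft x + m $ Inl ();
         LgBh = LieG gradB gt x + (\<chi> j. m $ Inr j);
         Sf = column (Inl ()) S;
         Sg = (\<chi> r j. S $ r $ Inr j) :: real^'m^(unit + 'm);
         c = LfBh + \<gamma> (B x);
         H11 = \<beta>\<^sup>2 * (Sf \<bullet> Sf) - c\<^sup>2;
         H1u = \<beta>\<^sup>2 *\<^sub>R (Sf v* Sg) - c *\<^sub>R LgBh;
         Huu = \<beta>\<^sup>2 *\<^sub>R (transpose Sg ** Sg) - (\<chi> i j. LgBh $ i * LgBh $ j)
     in (\<chi> i l. case (i, l) of
           (Inl _, Inl _) \<Rightarrow> H11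
         | (Inl _, Inr j) \<Rightarrow> H1u $ j
         | (Inr i', Inl _) \<Rightarrow> H1u $ i'
         | (Inr i', Inr j) \<Rightarrow> Huu $ i' $ j))"

end

theory Submission
  imports Defs
begin

lemma sum_unit_plus:
  fixes f :: "unit + 'm::finite \<Rightarrow> real"
  shows "sum f UNIV = f (Inl ()) + (\<Sum>j\<in>UNIV. f (Inr j))"
proof -
  have "sum f UNIV = sum f (insert (Inl ()) (range Inr))"
  proof -
    have "UNIV = insert (Inl ()) (range (Inr :: 'm \<Rightarrow> unit + 'm))"
      by (auto intro: sum.exhaust) (metis old.unit.exhaust sum.exhaust rangeI)
    then show ?thesis by simp
  qed
  also have "\<dots> = f (Inl ()) + sum f (range Inr)"
    by (subst sum.insert) auto
  also have "sum f (range Inr) = (\<Sum>j\<in>UNIV. f (Inr j))"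
    by (subst sum.reindex) (auto simp: inj_on_def)
  finally show ?thesis .
qed

lemma quad_outer:
  fixes a y :: "real^'k"
  shows "y \<bullet> ((\<chi> i j. a$i * a$j) *v y) = (a \<bullet> y)^2"
  by (simp add: inner_vec_def matrix_vector_mult_def power2_eq_square
      sum_distrib_left sum_distrib_right mult_ac)

lemma quad_SS:
  fixes S :: "real^'k^'k" and y :: "real^'k"
  assumes "transpose S = S"
  shows "y \<bullet> ((transpose S ** S) *v y) = (S *v y) \<bullet> (S *v y)"
proof -
  have "y \<bullet> ((transpose S ** S) *v y) = y \<bullet> (transpose S *v (S *v y))"
    by (simp only: matrix_vector_mul_assoc)
  also have "\<dots> = (y v* transpose S) \<bullet> (S *v y)"
    by (simp only: dot_lmul_matrix)
  also have "y v* transpose S = S *v y"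
    by (rule vector_transpose_matrix)
  finally show ?thesis .
qed

lemma scaleR_mat_vec:
  fixes A :: "real^'k^'l"
  shows "(c *\<^sub>R A) *v v = c *\<^sub>R (A *v v)"
  by (simp add: vec_eq_iff matrix_vector_mult_def sum_distrib_left mult_ac)

theorem lemma8:
  fixes X :: "(real^'n) set"
    and f ft :: "real^'n \<Rightarrow> real^'n"
    and g gt :: "real^'n \<Rightarrow> real^'m^'n"
    and B :: "real^'n \<Rightarrow> real"
    and gradB :: "real^'n \<Rightarrow> real^'n"
    and \<gamma> :: "real \<Rightarrow> real"
    and \<beta> \<sigma>n :: real
    and k :: "(unit + 'm) \<Rightarrow> real^'n \<Rightarrow> real^'n \<Rightarrow> real"
    and xs :: "'d::finite \<Rightarrow> real^'n"
    and us :: "'d \<Rightarrow> real^'m"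
    and zs eps :: "real^'d"
    and S :: "real^(unit + 'm)^(unit + 'm)"
    and x :: "real^'n"
  assumes B_C1: "\<forall>y\<in>X. (B has_derivative (\<lambda>h. gradB y \<bullet> h)) (at y within X)"
      and gradB_cont: "continuous_on X gradB"
      and gamma: "ext_class_K_inf \<gamma>"
      and beta: "\<beta> > 0"
      and sigma_n: "\<sigma>n > 0"
      and data_X: "\<forall>j. xs j \<in> X"
      and data: "\<forall>j. zs $ j = DeltaB gradB f g ft gt (xs j) (us j) + eps $ j"
      and x_in: "x \<in> X"
      and Sigma_pd: "pos_def (SigmaB k xs us \<sigma>n x)"
      and S_sym: "sym_mat S"
      and S_pd: "pos_def S"
      and S_sqrt: "S ** S = SigmaB k xs us \<sigma>n x"
      and feas: "socp_feasible gradB ft gt B \<gamma> \<beta> k xs us zs \<sigma>n x"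
  shows "\<not> pos_def (Hmat gradB ft gt B \<gamma> \<beta> (mB k xs us zs \<sigma>n x) S x)"
proof
  assume pd: "pos_def (Hmat gradB ft gt B \<gamma> \<beta> (mB k xs us zs \<sigma>n x) S x)"
  define m where "m = mB k xs us zs \<sigma>n x"
  define Sg where "Sg = SigmaB k xs us \<sigma>n x"
  obtain u where u: "LieF gradB ft x + LieG gradB gt x \<bullet> u + m \<bullet> yvec u
            - \<beta> * sqrt (yvec u \<bullet> (Sg *v yvec u)) + \<gamma> (B x) \<ge> 0"
    using feas unfolding socp_feasible_def muB_def sigmaB_def m_def Sg_def by blast
  define y where "y = yvec u"
  define a :: "real^(unit+'m)" where "a = (\<chi> i. case i of Inl _ \<Rightarrow> LieF gradB ft x + m $ Inl () + \<gamma> (B x)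
        | Inr j \<Rightarrow> LieG gradB gt x $ j + m $ Inr j)"
  have ay: "a \<bullet> y = LieF gradB ft x + LieG gradB gt x \<bullet> u + m \<bullet> yvec u + \<gamma> (B x)"
    unfolding y_def a_def yvec_def inner_vec_def
    by (simp add: sum_unit_plus sum.distrib algebra_simps)
  have St: "transpose S = S" using S_sym by (simp add: sym_mat_def)
  have H: "Hmat gradB ft gt B \<gamma> \<beta> m S x = \<beta>\<^sup>2 *\<^sub>R (transpose S ** S) - (\<chi> i j. a$i * a$j)"
    unfolding Hmat_def Let_def a_def
    by (auto simp: vec_eq_iff matrix_matrix_mult_def transpose_def column_def
        vector_matrix_mult_def inner_vec_def power2_eq_square mult.commute split: sum.splits)
  have "y \<noteq> 0"
    by (simp add: y_def yvec_def vec_eq_iff) (metis sum.case(1) zero_neq_one)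
  then have pos: "y \<bullet> (Hmat gradB ft gt B \<gamma> \<beta> m S x *v y) > 0"
    using pd unfolding pos_def_def m_def by blast
  have q: "y \<bullet> (Sg *v y) = (S *v y) \<bullet> (S *v y)"
    using quad_SS[OF St, of y] S_sqrt St unfolding Sg_def by simp
  have "y \<bullet> (Hmat gradB ft gt B \<gamma> \<beta> m S x *v y) = \<beta>\<^sup>2 * (y \<bullet> (Sg *v y)) - (a \<bullet> y)^2"
    unfolding H q using quad_SS[OF St, of y] quad_outer[of y a]
    by (simp add: matrix_vector_mult_diff_rdistrib scaleR_mat_vec inner_diff_right)
  moreover have "\<beta> * sqrt (y \<bullet> (Sg *v y)) \<le> a \<bullet> y" using u ay unfolding y_def by linarith
  moreover have "y \<bullet> (Sg *v y) \<ge> 0" using q by simp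
  ultimately have "\<beta>\<^sup>2 * (y \<bullet> (Sg *v y)) \<le> (a \<bullet> y)^2"
  proof -
    assume le: "\<beta> * sqrt (y \<bullet> (Sg *v y)) \<le> a \<bullet> y" and nn: "y \<bullet> (Sg *v y) \<ge> 0"
    have "0 \<le> \<beta> * sqrt (y \<bullet> (Sg *v y))" using beta nn by simp
    then have "(\<beta> * sqrt (y \<bullet> (Sg *v y)))^2 \<le> (a \<bullet> y)^2"
      using le power_mono by blast
    moreover have "(\<beta> * sqrt (y \<bullet> (Sg *v y)))^2 = \<beta>\<^sup>2 * (y \<bullet> (Sg *v y))"
      using nn by (simp add: power_mult_distrib)
    ultimately show ?thesis by simp
  qed
  with pos show False
    using \<open>y \<bullet> (Hmat gradB ft gt B \<gamma> \<beta> m S x *v y) = _\<close> by linarith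
qed

end
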